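(* For $n\ge1$, the number of equivalence classes of period configurations of Parallel Diffusion on the labelled complete graph $K_n$ (vertex set $\{1,\dots,n\}$) equals $$\sum_{(B_1,\dots,B_N)}\ \prod_{i=2}^{N}\bigl(|B_{i-1}|+|B_i|-1\bigr),$$ where the sum runs over all ordered set partitions $(B_1,\dots,B_N)$ of $\{1,\dots,n\}$ into nonempty blocks (any $N\ge1$), and the empty product (for $N=1$) equals $1$.
   Context: Parallel Diffusion on a graph $G$: a configuration assigns an integer stack size $|v|$ to each vertex. One firing step replaces every stack size simultaneously by $|v| + \#\{u\in N(v): |u|>|v|\} - \#\{u\in N(v): |u|<|v|\}$. A period configuration is a configuration $D$ such that repeated firing starting from $D$ returns to $D$ after some positive number of steps. Two configurations on the same labelled graph are equivalent if one is obtained from the other by adding the same integer to every vertex's stack size. (The ordered partition $(B_1,\dots,B_N)$ records which vertices share each of the $N$ distinct stack sizes, listed in increasing order of stack size.) *)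

theory Defs
  imports Main
begin

text \<open>Labelled complete graph K_n on vertex set {1..n}; a configuration is an integer
  stack size for each vertex, represented as a function nat => int that is 0 off {1..n}.\<close>

definition configs :: "nat \<Rightarrow> (nat \<Rightarrow> int) set" where
  "configs n = {D. \<forall>i. i \<notin> {1..n} \<longrightarrow> D i = 0}"

definition nbrs :: "nat \<Rightarrow> nat \<Rightarrow> nat set" where
  "nbrs n v = {1..n} - {v}"

definition fire :: "nat \<Rightarrow> (nat \<Rightarrow> int) \<Rightarrow> (nat \<Rightarrow> int)" where
  "fire n D = (\<lambda>v. if v \<in> {1..n} then
       D v + int (card {u \<in> nbrs n v. D u > D v}) - int (card {u \<in> nbrs n v. D u < D v})
     else 0)"

definition period_config :: "nat \<Rightarrow> (nat \<Rightarrow> int) \<Rightarrow> bool" where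
  "period_config n D \<longleftrightarrow> D \<in> configs n \<and> (\<exists>k>0. (fire n ^^ k) D = D)"

definition config_equiv :: "nat \<Rightarrow> ((nat \<Rightarrow> int) \<times> (nat \<Rightarrow> int)) set" where
  "config_equiv n = {(D, D'). D \<in> configs n \<and> D' \<in> configs n \<and>
       (\<exists>c::int. \<forall>v\<in>{1..n}. D' v = D v + c)}"

definition ordered_set_partitions :: "'a set \<Rightarrow> 'a set list set" where
  "ordered_set_partitions S = {bs. (\<forall>B\<in>set bs. B \<noteq> {}) \<and>
       (\<forall>i<length bs. \<forall>j<length bs. i \<noteq> j \<longrightarrow> bs ! i \<inter> bs ! j = {}) \<and>
       \<Union>(set bs) = S}"

end

theory Submission
  imports Defs "HOL-Library.FuncSet"
begin


definition gsum :: "nat \<Rightarrow> (nat \<Rightarrow> int) \<Rightarrow> nat \<Rightarrow> int" where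
  "gsum n x v = (\<Sum>u\<in>{1..n}. sgn (x v - x u))"

lemma gsum_card: "gsum n x v = int (card {u\<in>{1..n}. x u < x v}) - int (card {u\<in>{1..n}. x u > x v})"
proof -
  have "gsum n x v = (\<Sum>u\<in>{1..n}. (of_bool (x u < x v) - of_bool (x u > x v) :: int))"
    unfolding gsum_def by (rule sum.cong) (auto simp: sgn_if)
  also have "\<dots> = int (card ({1..n} \<inter> {u. x u < x v})) - int (card ({1..n} \<inter> {u. x u > x v}))"
    by (simp add: sum_subtractf)
  finally show ?thesis by (simp add: Int_def conj_commute)
qed

lemma fire_eq: "v \<in> {1..n} \<Longrightarrow> fire n D v = D v - gsum n D v"
proof -
  assume v: "v \<in> {1..n}"
  have 1: "{u \<in> nbrs n v. D u > D v} = {u\<in>{1..n}. D u > D v}" unfolding nbrs_def by auto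
  have 2: "{u \<in> nbrs n v. D u < D v} = {u\<in>{1..n}. D u < D v}" unfolding nbrs_def by auto
  show ?thesis using v unfolding fire_def 1 2 gsum_card by simp
qed

lemma fire_out: "v \<notin> {1..n} \<Longrightarrow> fire n D v = 0"
  by (auto simp: fire_def)

lemma gsum_neg: "gsum n (\<lambda>v. - x v) v = - gsum n x v"
  unfolding gsum_def by (simp add: sum_negf[symmetric] sgn_minus[symmetric] algebra_simps)

definition ip :: "nat \<Rightarrow> (nat \<Rightarrow> int) \<Rightarrow> (nat \<Rightarrow> int) \<Rightarrow> int" where
  "ip n x z = (\<Sum>v\<in>{1..n}. x v * z v)"

definition Pf :: "nat \<Rightarrow> (nat \<Rightarrow> int) \<Rightarrow> int" where
  "Pf n z = ip n (gsum n z) z"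

lemma two_ip: "2 * ip n (gsum n x) z =
   (\<Sum>v\<in>{1..n}. \<Sum>u\<in>{1..n}. sgn (x v - x u) * (z v - z u))"
proof -
  let ?V = "{1..n}"
  have a: "(\<Sum>v\<in>?V. \<Sum>u\<in>?V. sgn (x v - x u) * z u) = (\<Sum>u\<in>?V. \<Sum>v\<in>?V. sgn (x v - x u) * z u)"
    by (rule sum.swap)
  also have "\<dots> = - (\<Sum>u\<in>?V. \<Sum>v\<in>?V. sgn (x u - x v) * z u)"
  proof -
    have "\<And>u v. sgn (x v - x u) * z u = - (sgn (x u - x v) * z u)" by (simp add: sgn_if)
    thus ?thesis by (simp only: sum_negf)
  qed
  finally have a: "(\<Sum>v\<in>?V. \<Sum>u\<in>?V. sgn (x v - x u) * z u) = - (\<Sum>u\<in>?V. \<Sum>v\<in>?V. sgn (x u - x v) * z u)" .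
  have "(\<Sum>v\<in>?V. \<Sum>u\<in>?V. sgn (x v - x u) * (z v - z u)) =
        (\<Sum>v\<in>?V. \<Sum>u\<in>?V. sgn (x v - x u) * z v) - (\<Sum>v\<in>?V. \<Sum>u\<in>?V. sgn (x v - x u) * z u)"
    by (simp add: right_diff_distrib sum_subtractf)
  also have "\<dots> = 2 * (\<Sum>v\<in>?V. \<Sum>u\<in>?V. sgn (x v - x u) * z v)"
    using a by simp
  also have "\<dots> = 2 * ip n (gsum n x) z"
    unfolding ip_def gsum_def by (simp add: sum_distrib_right)
  finally show ?thesis by simp
qed

lemma sgn_mul_le: "sgn (a::int) * b \<le> sgn b * b"
  by (auto simp: sgn_if)

lemma ip_le: "ip n (gsum n x) z \<le> Pf n z"
proof -
  have "2 * ip n (gsum n x) z \<le> 2 * ip n (gsum n z) z"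
    unfolding two_ip by (intro sum_mono sgn_mul_le)
  thus ?thesis unfolding Pf_def by simp
qed

lemma ip_eq:
  assumes eq: "ip n (gsum n x) z = Pf n z" and u: "u \<in> {1..n}" and v: "v \<in> {1..n}"
    and lt: "z u < z v"
  shows "x u < x v"
proof -
  let ?V = "{1..n}"
  let ?t = "\<lambda>v u. sgn (z v - z u) * (z v - z u) - sgn (x v - x u) * (z v - z u)"
  have "(\<Sum>v\<in>?V. \<Sum>u\<in>?V. ?t v u) = 2 * ip n (gsum n z) z - 2 * ip n (gsum n x) z"
    unfolding two_ip by (simp add: sum_subtractf)
  also have "\<dots> = 0" using eq unfolding Pf_def by simp
  finally have s: "(\<Sum>v\<in>?V. \<Sum>u\<in>?V. ?t v u) = 0" .
  have nn: "\<And>v u. 0 \<le> ?t v u" by (simp add: sgn_mul_le)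
  have "\<forall>v\<in>?V. (\<Sum>u\<in>?V. ?t v u) = 0"
    using s by (subst (asm) sum_nonneg_eq_0_iff) (auto intro: sum_nonneg nn)
  hence "(\<Sum>u\<in>?V. ?t v u) = 0" using v by blast
  hence "?t v u = 0" using u by (subst (asm) sum_nonneg_eq_0_iff) (auto simp: sgn_mul_le)
  thus ?thesis using lt by (auto simp: sgn_if split: if_splits)
qed



definition revc :: "nat \<Rightarrow> (nat \<Rightarrow> int) \<Rightarrow> bool" where
  "revc n D \<longleftrightarrow> (\<forall>u\<in>{1..n}. \<forall>v\<in>{1..n}. D u < D v \<longrightarrow> fire n D u > fire n D v)"

lemma fire_same:
  assumes "u \<in> {1..n}" "v \<in> {1..n}" "x u = x v"
  shows "fire n x u = fire n x v"
  using assms by (simp add: fire_eq gsum_def)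

lemma funpow_same:
  assumes "u \<in> {1..n}" "v \<in> {1..n}" "y u = y v"
  shows "(fire n ^^ t) y u = (fire n ^^ t) y v"
  using assms by (induction t) (auto intro: fire_same)

lemma fire_configs: "fire n D \<in> configs n"
  unfolding configs_def by (auto simp: fire_out)

lemma period_imp_revc:
  assumes P: "period_config n D"
  shows "revc n D"
proof -
  obtain k where k: "k > 0" "(fire n ^^ k) D = D" using P unfolding period_config_def by blast
  define x where "x t = (fire n ^^ t) D" for t
  have xs: "x (Suc t) = fire n (x t)" for t unfolding x_def by simp
  have step: "x (Suc t) v = x t v - gsum n (x t) v" if "v \<in> {1..n}" for t v
    using that by (simp add: xs fire_eq)
  define Q where "Q t = ip n (x t) (x (Suc t))" for t
  have dec: "Q (Suc t) \<le> Q t" for t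
  proof -
    have "Q t - Q (Suc t) = (\<Sum>v\<in>{1..n}. x (Suc t) v * (gsum n (x t) v + gsum n (x (Suc t)) v))"
      unfolding Q_def ip_def sum_subtractf[symmetric]
      by (intro sum.cong refl) (simp add: step algebra_simps)
    also have "\<dots> = ip n (gsum n (x t)) (x (Suc t)) + Pf n (x (Suc t))"
      unfolding Pf_def ip_def by (simp add: algebra_simps sum.distrib)
    finally have e: "Q t - Q (Suc t) = ip n (gsum n (x t)) (x (Suc t)) + Pf n (x (Suc t))" .
    have "ip n (gsum n (\<lambda>v. - x t v)) (x (Suc t)) \<le> Pf n (x (Suc t))" by (rule ip_le)
    hence "- ip n (gsum n (x t)) (x (Suc t)) \<le> Pf n (x (Suc t))"
      unfolding ip_def gsum_neg by (simp add: sum_negf)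
    thus ?thesis using e by simp
  qed
  have "Q k \<le> Q 1" "Q 1 \<le> Q 0" using k(1) by (auto intro!: lift_Suc_antimono_le[of Q] dec)
  moreover have "Q k = Q 0" unfolding Q_def using k(2) by (simp add: x_def)
  ultimately have Q01: "Q 0 = Q 1" by simp
  have e0: "ip n (gsum n (\<lambda>v. - D v)) (fire n D) = Pf n (fire n D)"
  proof -
    have "Q 0 - Q (Suc 0) = (\<Sum>v\<in>{1..n}. x (Suc 0) v * (gsum n (x 0) v + gsum n (x (Suc 0)) v))"
      unfolding Q_def ip_def sum_subtractf[symmetric]
      by (intro sum.cong refl) (simp add: step algebra_simps)
    also have "\<dots> = ip n (gsum n (x 0)) (x (Suc 0)) + Pf n (x (Suc 0))"
      unfolding Pf_def ip_def by (simp add: algebra_simps sum.distrib)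
    finally have "ip n (gsum n (x 0)) (x (Suc 0)) + Pf n (x (Suc 0)) = 0" using Q01 by simp
    hence "- ip n (gsum n D) (fire n D) = Pf n (fire n D)" by (simp add: x_def)
    thus ?thesis unfolding ip_def gsum_neg by (simp add: sum_negf)
  qed
  show ?thesis unfolding revc_def
  proof (intro ballI impI)
    fix u v assume u: "u \<in> {1..n}" and v: "v \<in> {1..n}" and lt: "D u < D v"
    show "fire n D u > fire n D v"
    proof (rule ccontr)
      assume "\<not> fire n D u > fire n D v"
      hence "fire n D u < fire n D v \<or> fire n D u = fire n D v" by auto
      thus False
      proof
        assume "fire n D u < fire n D v"
        hence "- D u < - D v" using ip_eq[OF e0 u v] by simp
        thus False using lt by simp
      next
        assume eq: "fire n D u = fire n D v"
        have "(fire n ^^ (k - 1)) (fire n D) u = (fire n ^^ (k - 1)) (fire n D) v"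
          by (rule funpow_same[OF u v eq])
        moreover have "(fire n ^^ (k - 1)) (fire n D) = (fire n ^^ k) D"
          using k(1) by (metis Suc_diff_1 funpow_Suc_right o_apply)
        ultimately show False using k(2) lt by simp
      qed
    qed
  qed
qed

lemma revc_imp_period:
  assumes C: "D \<in> configs n" and R: "revc n D"
  shows "period_config n D"
proof -
  have sg: "sgn (fire n D v - fire n D u) = sgn (D u - D v)" if "u \<in> {1..n}" "v \<in> {1..n}" for u v
  proof -
    have "D u < D v \<or> D u = D v \<or> D v < D u" by auto
    thus ?thesis
    proof (elim disjE)
      assume "D u < D v"
      hence "fire n D v < fire n D u" using R that unfolding revc_def by blast
      thus ?thesis using \<open>D u < D v\<close> by (simp add: sgn_if)
    next
      assume "D u = D v" thus ?thesis using fire_same[OF that] by (simp add: sgn_if)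
    next
      assume "D v < D u"
      hence "fire n D u < fire n D v" using R that unfolding revc_def by blast
      thus ?thesis using \<open>D v < D u\<close> by (simp add: sgn_if)
    qed
  qed
  have g: "gsum n (fire n D) v = - gsum n D v" if "v \<in> {1..n}" for v
  proof -
    have "gsum n (fire n D) v = (\<Sum>u\<in>{1..n}. sgn (D u - D v))"
      unfolding gsum_def using that by (intro sum.cong) (auto simp: sg)
    also have "\<dots> = - gsum n D v" unfolding gsum_def
      by (simp add: sum_negf[symmetric] sgn_minus[symmetric])
    finally show ?thesis .
  qed
  have "fire n (fire n D) = D"
  proof
    fix v show "fire n (fire n D) v = D v"
    proof (cases "v \<in> {1..n}")
      case True thus ?thesis by (simp add: fire_eq g)
    next
      case False thus ?thesis using C by (simp add: fire_out configs_def)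
    qed
  qed
  hence "(fire n ^^ 2) D = D" by (simp add: numeral_2_eq_2)
  thus ?thesis using C unfolding period_config_def by (intro conjI exI[of _ 2]) auto
qed

lemma period_iff: "period_config n D \<longleftrightarrow> D \<in> configs n \<and> revc n D"
  using period_imp_revc revc_imp_period period_config_def by blast



lemma strict_idx:
  assumes "sorted_wrt (<) (xs :: int list)" "i < length xs" "j < length xs"
  shows "xs ! i < xs ! j \<longleftrightarrow> i < j"
proof -
  have "i < j \<or> i = j \<or> j < i" by auto
  thus ?thesis using sorted_wrt_nth_less[OF assms(1)] assms(2,3) by force
qed

lemma strict_idx_le:
  assumes "sorted_wrt (<) (xs :: int list)" "i < length xs" "j < length xs"
  shows "xs ! i \<le> xs ! j \<longleftrightarrow> i \<le> j"
  using strict_idx[OF assms(1) assms(3) assms(2)] by (simp add: not_less[symmetric])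

lemma gdiff:
  assumes "D u < D v"
  shows "gsum n D v - gsum n D u =
    int (card {w\<in>{1..n}. D u \<le> D w \<and> D w < D v}) + int (card {w\<in>{1..n}. D u < D w \<and> D w \<le> D v})"
proof -
  have "gsum n D v - gsum n D u = (\<Sum>w\<in>{1..n}. (of_bool (D u \<le> D w \<and> D w < D v) + of_bool (D u < D w \<and> D w \<le> D v) :: int))"
    unfolding gsum_def sum_subtractf[symmetric] using assms
    by (intro sum.cong refl) (auto simp: sgn_if)
  also have "\<dots> = int (card ({1..n} \<inter> {w. D u \<le> D w \<and> D w < D v})) + int (card ({1..n} \<inter> {w. D u < D w \<and> D w \<le> D v}))"
    by (simp add: sum.distrib)
  finally show ?thesis by (simp add: Int_def conj_commute)
qed

lemma revc_gap:
  "revc n D \<longleftrightarrow> (\<forall>u\<in>{1..n}. \<forall>v\<in>{1..n}. D u < D v \<longrightarrow>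
      D v - D u < int (card {w\<in>{1..n}. D u \<le> D w \<and> D w < D v}) + int (card {w\<in>{1..n}. D u < D w \<and> D w \<le> D v}))"
proof -
  have key: "(fire n D u > fire n D v) \<longleftrightarrow>
      D v - D u < int (card {w\<in>{1..n}. D u \<le> D w \<and> D w < D v}) + int (card {w\<in>{1..n}. D u < D w \<and> D w \<le> D v})"
    if "u \<in> {1..n}" "v \<in> {1..n}" "D u < D v" for u v
  proof -
    have "(fire n D u > fire n D v) \<longleftrightarrow> D v - D u < gsum n D v - gsum n D u"
      using that by (simp add: fire_eq, linarith)
    thus ?thesis using gdiff[OF that(3), of n] by simp
  qed
  show ?thesis unfolding revc_def using key by blast
qed

abbreviation OSP where "OSP n \<equiv> ordered_set_partitions {1..n::nat}"

lemma osp_disj: "bs \<in> ordered_set_partitions S \<Longrightarrow> i < length bs \<Longrightarrow> j < length bs \<Longrightarrow> i \<noteq> j \<Longrightarrow> bs ! i \<inter> bs ! j = {}"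
  unfolding ordered_set_partitions_def by blast

lemma osp_ne: "bs \<in> ordered_set_partitions S \<Longrightarrow> i < length bs \<Longrightarrow> bs ! i \<noteq> {}"
  unfolding ordered_set_partitions_def by auto

lemma osp_sub: "bs \<in> ordered_set_partitions S \<Longrightarrow> i < length bs \<Longrightarrow> bs ! i \<subseteq> S"
  unfolding ordered_set_partitions_def by auto

lemma osp_cover: "bs \<in> ordered_set_partitions S \<Longrightarrow> v \<in> S \<Longrightarrow> \<exists>j<length bs. v \<in> bs ! j"
  unfolding ordered_set_partitions_def by (auto simp: in_set_conv_nth)

definition lev :: "nat set list \<Rightarrow> nat \<Rightarrow> nat" where
  "lev bs v = (THE j. j < length bs \<and> v \<in> bs ! j)"

lemma lev_unique:
  assumes "bs \<in> ordered_set_partitions S" "j < length bs" "v \<in> bs ! j"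
  shows "lev bs v = j"
  unfolding lev_def
proof (rule the_equality)
  show "j < length bs \<and> v \<in> bs ! j" using assms by blast
  fix j' assume "j' < length bs \<and> v \<in> bs ! j'"
  thus "j' = j" using osp_disj[OF assms(1)] assms by blast
qed

lemma lev_props:
  assumes "bs \<in> ordered_set_partitions S" "v \<in> S"
  shows "lev bs v < length bs" "v \<in> bs ! lev bs v"
  using osp_cover[OF assms] lev_unique[OF assms(1)] by force+

lemma osp_length:
  assumes "bs \<in> ordered_set_partitions S" "finite S"
  shows "length bs \<le> card S"
proof -
  define f where "f k = (SOME v. v \<in> bs ! k)" for k
  have f: "f k \<in> bs ! k" if "k < length bs" for k
    unfolding f_def using osp_ne[OF assms(1) that] by (simp add: some_in_eq)
  have "inj_on f {..<length bs}"
  proof (rule inj_onI)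
    fix i j assume "i \<in> {..<length bs}" "j \<in> {..<length bs}" "f i = f j"
    thus "i = j" using f[of i] f[of j] osp_disj[OF assms(1), of i j] by auto
  qed
  moreover have "f ` {..<length bs} \<subseteq> S" using f osp_sub[OF assms(1)] by auto
  ultimately have "card {..<length bs} \<le> card S" using card_inj_on_le assms(2) by blast
  thus ?thesis by simp
qed

lemma finite_osp: "finite S \<Longrightarrow> finite (ordered_set_partitions S)"
proof -
  assume fS: "finite S"
  have "ordered_set_partitions S \<subseteq> {xs. set xs \<subseteq> Pow S \<and> length xs \<le> card S}"
  proof
    fix bs assume b: "bs \<in> ordered_set_partitions S"
    have "set bs \<subseteq> Pow S"
    proof
      fix B assume "B \<in> set bs"
      then obtain i where "i < length bs" "B = bs ! i" by (auto simp: in_set_conv_nth)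
      thus "B \<in> Pow S" using osp_sub[OF b] by auto
    qed
    thus "bs \<in> {xs. set xs \<subseteq> Pow S \<and> length xs \<le> card S}" using osp_length[OF b fS] by simp
  qed
  moreover have "finite {xs. set xs \<subseteq> Pow S \<and> length xs \<le> card S}"
    using finite_lists_length_le[of "Pow S"] fS by simp
  ultimately show ?thesis by (rule finite_subset)
qed



definition Hs :: "nat set list \<Rightarrow> (nat \<Rightarrow> int) set" where
  "Hs bs = (\<Pi>\<^sub>E i\<in>{1..<length bs}. {1..int (card (bs ! (i - 1))) + int (card (bs ! i)) - 1})"

definition T :: "(nat \<Rightarrow> int) \<Rightarrow> nat \<Rightarrow> int" where
  "T h j = (\<Sum>i\<in>{1..j}. h i)"

lemma T_0[simp]: "T h 0 = 0" by (simp add: T_def)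
lemma T_Suc: "T h (Suc j) = T h j + h (Suc j)" by (simp add: T_def)

lemma Hs_bounds:
  assumes "h \<in> Hs bs" "1 \<le> k" "k < length bs"
  shows "1 \<le> h k" "h k < int (card (bs ! (k - 1))) + int (card (bs ! k))"
  using PiE_mem[OF assms(1)[unfolded Hs_def], of k] assms(2,3) by auto

lemma T_mono:
  assumes "h \<in> Hs bs" "j < j'" "j' < length bs"
  shows "T h j < T h j'"
  using assms(2,3)
proof (induction j')
  case 0 thus ?case by simp
next
  case (Suc j')
  have "1 \<le> h (Suc j')" using Hs_bounds(1)[OF assms(1), of "Suc j'"] Suc.prems by simp
  moreover have "T h j \<le> T h j'" using Suc by (cases "j = j'") auto
  ultimately show ?case by (simp add: T_Suc)
qed

lemma T_less_iff:
  assumes "h \<in> Hs bs" "j < length bs" "j' < length bs"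
  shows "T h j < T h j' \<longleftrightarrow> j < j'"
  using T_mono[OF assms(1) _ assms(2)] T_mono[OF assms(1) _ assms(3)]
  by (metis less_asym linorder_neqE_nat)

lemma T_le_iff:
  assumes "h \<in> Hs bs" "j < length bs" "j' < length bs"
  shows "T h j \<le> T h j' \<longleftrightarrow> j \<le> j'"
  using T_less_iff[OF assms(1) assms(3) assms(2)] by (simp add: not_less[symmetric])

lemma T_gap:
  assumes "h \<in> Hs bs" "i < j" "j < length bs"
  shows "T h j - T h i + int (j - i) \<le>
     (\<Sum>k\<in>{i..<j}. int (card (bs ! k))) + (\<Sum>k\<in>{Suc i..j}. int (card (bs ! k)))"
  using assms(2,3)
proof (induction j)
  case 0 thus ?case by simp
next
  case (Suc j)
  have hb: "h (Suc j) < int (card (bs ! j)) + int (card (bs ! Suc j))"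
    using Hs_bounds(2)[OF assms(1), of "Suc j"] Suc.prems by simp
  show ?case
  proof (cases "j = i")
    case True thus ?thesis using hb by (simp add: T_Suc)
  next
    case False
    hence ij: "i < j" using Suc.prems by simp
    have IH: "T h j - T h i + int (j - i) \<le>
     (\<Sum>k\<in>{i..<j}. int (card (bs ! k))) + (\<Sum>k\<in>{Suc i..j}. int (card (bs ! k)))"
      using Suc.IH ij Suc.prems by simp
    have "int (Suc j - i) = int (j - i) + 1" using ij by simp
    thus ?thesis using IH hb ij by (simp add: T_Suc)
  qed
qed

lemma card_lev:
  assumes "bs \<in> OSP n" "K \<subseteq> {..<length bs}"
  shows "card {w\<in>{1..n}. lev bs w \<in> K} = (\<Sum>k\<in>K. card (bs ! k))"
proof -
  have eq: "{w\<in>{1..n}. lev bs w \<in> K} = (\<Union>k\<in>K. bs ! k)"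
  proof
    show "{w\<in>{1..n}. lev bs w \<in> K} \<subseteq> (\<Union>k\<in>K. bs ! k)"
      using lev_props[OF assms(1)] by blast
    show "(\<Union>k\<in>K. bs ! k) \<subseteq> {w\<in>{1..n}. lev bs w \<in> K}"
    proof
      fix w assume "w \<in> (\<Union>k\<in>K. bs ! k)"
      then obtain k where k: "k \<in> K" "w \<in> bs ! k" by blast
      hence "k < length bs" using assms(2) by auto
      have w: "w \<in> {1..n}" using osp_sub[OF assms(1) \<open>k < length bs\<close>] k by blast
      have "lev bs w = k" using lev_unique[OF assms(1) \<open>k < length bs\<close> k(2)] .
      thus "w \<in> {w\<in>{1..n}. lev bs w \<in> K}" using w k by simp
    qed
  qed
  have fK: "finite K" using assms(2) finite_subset by blast
  have "card (\<Union>k\<in>K. bs ! k) = (\<Sum>k\<in>K. card (bs ! k))"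
  proof (rule card_UN_disjoint[OF fK])
    show "\<forall>k\<in>K. finite (bs ! k)" using assms osp_sub[OF assms(1)] finite_subset by blast
    show "\<forall>k\<in>K. \<forall>j\<in>K. k \<noteq> j \<longrightarrow> bs ! k \<inter> bs ! j = {}"
      using assms osp_disj[OF assms(1)] by blast
  qed
  thus ?thesis using eq by simp
qed

definition Phi :: "nat \<Rightarrow> nat set list \<times> (nat \<Rightarrow> int) \<Rightarrow> nat \<Rightarrow> int" where
  "Phi n p = (\<lambda>v. if v \<in> {1..n} then T (snd p) (lev (fst p) v) else 0)"

definition Norm :: "nat \<Rightarrow> (nat \<Rightarrow> int) set" where
  "Norm n = {D. D \<in> configs n \<and> revc n D \<and> Min (D ` {1..n}) = 0}"

lemma Phi_in_Norm:
  assumes n: "n \<ge> 1" and bs: "bs \<in> OSP n" and h: "h \<in> Hs bs"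
  shows "Phi n (bs, h) \<in> Norm n"
proof -
  define D where "D = Phi n (bs, h)"
  have Dv: "D v = T h (lev bs v)" if "v \<in> {1..n}" for v using that by (simp add: D_def Phi_def)
  have conf: "D \<in> configs n" by (simp add: D_def Phi_def configs_def)
  have L: "lev bs v < length bs" "v \<in> bs ! lev bs v" if "v \<in> {1..n}" for v
    using lev_props[OF bs that] by auto
  have rev: "revc n D" unfolding revc_gap
  proof (intro ballI impI)
    fix u v assume u: "u \<in> {1..n}" and v: "v \<in> {1..n}" and lt: "D u < D v"
    define i where "i = lev bs u"
    define j where "j = lev bs v"
    have iN: "i < length bs" and jN: "j < length bs" using L u v by (auto simp: i_def j_def)
    have ij: "i < j" using lt Dv[OF u] Dv[OF v] T_less_iff[OF h iN jN] by (simp add: i_def j_def)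
    have s1: "{w\<in>{1..n}. D u \<le> D w \<and> D w < D v} = {w\<in>{1..n}. lev bs w \<in> {i..<j}}"
      using Dv u v L T_le_iff[OF h] T_less_iff[OF h] iN jN unfolding i_def j_def by auto
    have s2: "{w\<in>{1..n}. D u < D w \<and> D w \<le> D v} = {w\<in>{1..n}. lev bs w \<in> {Suc i..j}}"
      using Dv u v L T_le_iff[OF h] T_less_iff[OF h] iN jN unfolding i_def j_def by auto
    have c1: "card {w\<in>{1..n}. lev bs w \<in> {i..<j}} = (\<Sum>k\<in>{i..<j}. card (bs ! k))"
      by (rule card_lev[OF bs]) (use jN in auto)
    have c2: "card {w\<in>{1..n}. lev bs w \<in> {Suc i..j}} = (\<Sum>k\<in>{Suc i..j}. card (bs ! k))"
      by (rule card_lev[OF bs]) (use jN in auto)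
    have g: "T h j - T h i + int (j - i) \<le>
       (\<Sum>k\<in>{i..<j}. int (card (bs ! k))) + (\<Sum>k\<in>{Suc i..j}. int (card (bs ! k)))"
      by (rule T_gap[OF h ij jN])
    show "D v - D u < int (card {w\<in>{1..n}. D u \<le> D w \<and> D w < D v}) + int (card {w\<in>{1..n}. D u < D w \<and> D w \<le> D v})"
      unfolding s1 s2 c1 c2 using g ij Dv[OF u] Dv[OF v] by (simp add: i_def j_def)
  qed
  have min: "Min (D ` {1..n}) = 0"
  proof (rule Min_eqI)
    show "finite (D ` {1..n})" by simp
    show "0 \<le> y" if yin: "y \<in> D ` {1..n}" for y
    proof -
      obtain w where w: "w \<in> {1..n}" "y = D w" using yin by blast
      have "T h 0 \<le> T h (lev bs w)" using T_le_iff[OF h _ L(1)[OF w(1)], of 0] L(1)[OF w(1)] by linarith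
      thus ?thesis using w Dv by simp
    qed
    have "1 \<in> {1..n}" using n by simp
    then obtain j where j: "j < length bs" using osp_cover[OF bs] by blast
    hence l0: "0 < length bs" by (cases bs) auto
    hence "bs ! 0 \<noteq> {}" by (rule osp_ne[OF bs])
    then obtain w where w: "w \<in> bs ! 0" by blast
    have w1: "w \<in> {1..n}" using osp_sub[OF bs l0] w by blast
    have "lev bs w = 0" using lev_unique[OF bs l0 w] .
    thus "0 \<in> D ` {1..n}" using Dv[OF w1] w1 by force
  qed
  show ?thesis using conf rev min unfolding Norm_def D_def by simp
qed



definition vsl :: "nat \<Rightarrow> (nat \<Rightarrow> int) \<Rightarrow> int list" where
  "vsl n D = sorted_list_of_set (D ` {1..n})"

definition Psi :: "nat \<Rightarrow> (nat \<Rightarrow> int) \<Rightarrow> nat set list \<times> (nat \<Rightarrow> int)" where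
  "Psi n D = (map (\<lambda>a. {v\<in>{1..n}. D v = a}) (vsl n D),
              restrict (\<lambda>i. vsl n D ! i - vsl n D ! (i - 1)) {1..<length (vsl n D)})"

lemma vsl_sorted: "sorted_wrt (<) (vsl n D)"
  unfolding vsl_def by (rule strict_sorted_list_of_set)

lemma vsl_set: "set (vsl n D) = D ` {1..n}"
  unfolding vsl_def by simp

lemma vsl_distinct: "distinct (vsl n D)"
  using vsl_sorted strict_sorted_iff by blast

lemma vsl_eq_iff: "k < length (vsl n D) \<Longrightarrow> m < length (vsl n D) \<Longrightarrow> vsl n D ! k = vsl n D ! m \<longleftrightarrow> k = m"
  using nth_eq_iff_index_eq[OF vsl_distinct] by blast

lemma vsl_0:
  assumes "n \<ge> 1" "D \<in> Norm n"
  shows "vsl n D ! 0 = 0" "0 < length (vsl n D)"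
proof -
  have ne: "D ` {1..n} \<noteq> {}" using assms(1) by auto
  have "vsl n D = Min (D ` {1..n}) # sorted_list_of_set (D ` {1..n} - {Min (D ` {1..n})})"
    unfolding vsl_def by (rule sorted_list_of_set_nonempty) (use ne in auto)
  thus "vsl n D ! 0 = 0" "0 < length (vsl n D)" using assms(2) unfolding Norm_def by auto
qed

lemma between:
  assumes s: "sorted_wrt (<) (vs :: int list)" and d: "distinct vs" and i: "1 \<le> i" "i < length vs"
    and x: "x \<in> set vs"
  shows "(vs ! (i - 1) \<le> x \<and> x < vs ! i) \<longleftrightarrow> x = vs ! (i - 1)"
    "(vs ! (i - 1) < x \<and> x \<le> vs ! i) \<longleftrightarrow> x = vs ! i"
proof -
  obtain k where k: "k < length vs" "x = vs ! k" using x by (auto simp: in_set_conv_nth)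
  have i1: "i - 1 < length vs" using i by simp
  have e1: "vs ! k = vs ! (i - 1) \<longleftrightarrow> k = i - 1" using nth_eq_iff_index_eq[OF d k(1) i1] .
  have e2: "vs ! k = vs ! i \<longleftrightarrow> k = i" using nth_eq_iff_index_eq[OF d k(1) i(2)] .
  show "(vs ! (i - 1) \<le> x \<and> x < vs ! i) \<longleftrightarrow> x = vs ! (i - 1)"
    unfolding k(2) e1 strict_idx_le[OF s i1 k(1)] strict_idx[OF s k(1) i(2)] using i by auto
  show "(vs ! (i - 1) < x \<and> x \<le> vs ! i) \<longleftrightarrow> x = vs ! i"
    unfolding k(2) e2 strict_idx[OF s i1 k(1)] strict_idx_le[OF s k(1) i(2)] using i by auto
qed

lemma Psi_osp:
  shows "fst (Psi n D) \<in> OSP n"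
proof -
  let ?vs = "vsl n D"
  let ?bs = "map (\<lambda>a. {v\<in>{1..n}. D v = a}) ?vs"
  have "\<forall>B\<in>set ?bs. B \<noteq> {}" using vsl_set by auto
  moreover have "\<forall>i<length ?bs. \<forall>j<length ?bs. i \<noteq> j \<longrightarrow> ?bs ! i \<inter> ?bs ! j = {}"
    using vsl_eq_iff by auto
  moreover have "\<Union>(set ?bs) = {1..n}" using vsl_set by auto
  ultimately show ?thesis unfolding Psi_def ordered_set_partitions_def by simp
qed

lemma Psi_block: "k < length (vsl n D) \<Longrightarrow> fst (Psi n D) ! k = {v\<in>{1..n}. D v = vsl n D ! k}"
  unfolding Psi_def by simp

lemma Psi_in_Sg:
  assumes "D \<in> Norm n"
  shows "Psi n D \<in> Sigma (OSP n) Hs"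
proof -
  let ?vs = "vsl n D"
  define bs where "bs = fst (Psi n D)"
  have lb: "length bs = length ?vs" unfolding bs_def Psi_def by simp
  have rv: "revc n D" using assms unfolding Norm_def by simp
  have "snd (Psi n D) \<in> Hs bs"
    unfolding Hs_def lb unfolding Psi_def snd_conv restrict_PiE_iff
  proof
    fix i assume i: "i \<in> {1..<length ?vs}"
    hence i1: "1 \<le> i" "i < length ?vs" by auto
    have il: "i - 1 < length ?vs" using i1 by simp
    have lo: "?vs ! (i - 1) < ?vs ! i" using strict_idx[OF vsl_sorted il i1(2)] i1 by simp
    have "?vs ! (i - 1) \<in> D ` {1..n}" using il vsl_set nth_mem by metis
    then obtain u where u: "u \<in> {1..n}" "D u = ?vs ! (i - 1)" by auto
    have "?vs ! i \<in> D ` {1..n}" using i1 vsl_set nth_mem by metis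
    then obtain v where v: "v \<in> {1..n}" "D v = ?vs ! i" by auto
    have gap: "D v - D u < int (card {w\<in>{1..n}. D u \<le> D w \<and> D w < D v}) + int (card {w\<in>{1..n}. D u < D w \<and> D w \<le> D v})"
    proof -
      have "D u < D v" using lo u(2) v(2) by simp
      thus ?thesis using rv[unfolded revc_gap] u(1) v(1) by blast
    qed
    have inset: "D w \<in> set ?vs" if "w \<in> {1..n}" for w using that vsl_set by auto
    have s1: "{w\<in>{1..n}. D u \<le> D w \<and> D w < D v} = bs ! (i - 1)"
      unfolding bs_def Psi_block[OF il] u(2) v(2)
      using between(1)[OF vsl_sorted vsl_distinct i1 inset] by auto
    have s2: "{w\<in>{1..n}. D u < D w \<and> D w \<le> D v} = bs ! i"
      unfolding bs_def Psi_block[OF i1(2)] u(2) v(2)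
      using between(2)[OF vsl_sorted vsl_distinct i1 inset] by auto
    show "?vs ! i - ?vs ! (i - 1) \<in> {1..int (card (bs ! (i - 1))) + int (card (bs ! i)) - 1}"
      using gap lo u(2) v(2) unfolding s1 s2 by simp
  qed
  thus ?thesis using Psi_osp[of n D] unfolding bs_def by (cases "Psi n D") auto
qed

lemma telescope: fixes j :: nat shows "(\<Sum>i\<in>{1..j}. (f i - f (i - 1) :: int)) = f j - f 0"
  by (induction j) auto

lemma Phi_Psi:
  assumes n: "n \<ge> 1" and D: "D \<in> Norm n"
  shows "Phi n (Psi n D) = D"
proof
  fix v
  let ?vs = "vsl n D"
  show "Phi n (Psi n D) v = D v"
  proof (cases "v \<in> {1..n}")
    case False thus ?thesis using D unfolding Phi_def Norm_def configs_def by auto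
  next
    case True
    have "D v \<in> set ?vs" using True vsl_set by auto
    then obtain j where j: "j < length ?vs" "?vs ! j = D v" by (auto simp: in_set_conv_nth)
    have "v \<in> fst (Psi n D) ! j" using Psi_block[OF j(1)] j True by simp
    moreover have "j < length (fst (Psi n D))" using j unfolding Psi_def by simp
    ultimately have lv: "lev (fst (Psi n D)) v = j" using lev_unique[OF Psi_osp] by blast
    have "T (snd (Psi n D)) j = (\<Sum>i\<in>{1..j}. ?vs ! i - ?vs ! (i - 1))"
      unfolding T_def Psi_def snd_conv using j(1) by (intro sum.cong refl) auto
    also have "\<dots> = ?vs ! j - ?vs ! 0" by (rule telescope)
    also have "\<dots> = D v" using j vsl_0[OF n D] by simp
    finally show ?thesis using True lv unfolding Phi_def by simp
  qed
qed

lemma Psi_Phi: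
  assumes n: "n \<ge> 1" and bs: "bs \<in> OSP n" and h: "h \<in> Hs bs"
  shows "Psi n (Phi n (bs, h)) = (bs, h)"
proof -
  define D where "D = Phi n (bs, h)"
  define N where "N = length bs"
  have Dv: "D v = T h (lev bs v)" if "v \<in> {1..n}" for v using that by (simp add: D_def Phi_def)
  have L: "lev bs v < N" "v \<in> bs ! lev bs v" if "v \<in> {1..n}" for v
    using lev_props[OF bs that] by (auto simp: N_def)
  have ex: "\<exists>w\<in>{1..n}. lev bs w = j" if "j < N" for j
  proof -
    have jl: "j < length bs" using that by (simp add: N_def)
    have "bs ! j \<noteq> {}" using osp_ne[OF bs jl] .
    then obtain w where w: "w \<in> bs ! j" by blast
    have w1: "w \<in> {1..n}" using osp_sub[OF bs jl] w by blast
    show ?thesis using w1 lev_unique[OF bs jl w] by blast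
  qed
  have img: "D ` {1..n} = T h ` {..<N}"
  proof
    show "D ` {1..n} \<subseteq> T h ` {..<N}" using Dv L by auto
    show "T h ` {..<N} \<subseteq> D ` {1..n}"
    proof
      fix y assume "y \<in> T h ` {..<N}"
      then obtain j where "j < N" "y = T h j" by auto
      thus "y \<in> D ` {1..n}" using ex[of j] Dv by force
    qed
  qed
  have sw: "sorted_wrt (<) (map (T h) [0..<N])"
    unfolding sorted_wrt_iff_nth_less using T_mono[OF h] by (simp add: N_def)
  have vs: "vsl n D = map (T h) [0..<N]"
  proof -
    have "distinct (map (T h) [0..<N])" using sw strict_sorted_iff by blast
    hence "length (map (T h) [0..<N]) = card (T h ` {..<N})"
      using distinct_card by (metis atLeast_upt set_map)
    hence a: "sorted_wrt (<) (map (T h) [0..<N]) \<and> set (map (T h) [0..<N]) = D ` {1..n}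
         \<and> length (map (T h) [0..<N]) = card (D ` {1..n})"
      using sw img by (simp add: atLeast_upt)
    have u: "sorted_wrt (<) (map (T h) [0..<N]) \<and> set (map (T h) [0..<N]) = D ` {1..n}
         \<and> length (map (T h) [0..<N]) = card (D ` {1..n}) \<longleftrightarrow> sorted_list_of_set (D ` {1..n}) = map (T h) [0..<N]"
      by (rule sorted_list_of_set_unique) auto
    show ?thesis unfolding vsl_def using iffD1[OF u a] .
  qed
  have fst_eq: "fst (Psi n D) = bs"
  proof (rule nth_equalityI)
    show "length (fst (Psi n D)) = length bs" unfolding Psi_def vs by (simp add: N_def)
    fix j assume "j < length (fst (Psi n D))"
    hence j: "j < N" unfolding Psi_def vs by simp
    have "fst (Psi n D) ! j = {v\<in>{1..n}. D v = T h j}" unfolding Psi_def vs using j by simp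
    also have "\<dots> = {v\<in>{1..n}. lev bs v = j}"
    proof (rule Collect_cong)
      fix v
      show "(v \<in> {1..n} \<and> D v = T h j) = (v \<in> {1..n} \<and> lev bs v = j)"
      proof (cases "v \<in> {1..n}")
        case True
        have l: "lev bs v < length bs" using L(1)[OF True] by (simp add: N_def)
        have jl: "j < length bs" using j by (simp add: N_def)
        have "T h (lev bs v) = T h j \<longleftrightarrow> lev bs v = j"
          using T_le_iff[OF h l jl] T_le_iff[OF h jl l] by (metis order.antisym order.refl)
        thus ?thesis using True Dv[OF True] by simp
      next
        case False thus ?thesis by blast
      qed
    qed
    also have "\<dots> = bs ! j"
    proof (rule set_eqI)
      fix v
      have jl: "j < length bs" using j by (simp add: N_def)
      show "v \<in> {v\<in>{1..n}. lev bs v = j} \<longleftrightarrow> v \<in> bs ! j"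
      proof
        assume "v \<in> {v\<in>{1..n}. lev bs v = j}"
        thus "v \<in> bs ! j" using L(2) by auto
      next
        assume vb: "v \<in> bs ! j"
        have "v \<in> {1..n}" using osp_sub[OF bs jl] vb by blast
        thus "v \<in> {v\<in>{1..n}. lev bs v = j}" using lev_unique[OF bs jl vb] by simp
      qed
    qed
    finally show "fst (Psi n D) ! j = bs ! j" .
  qed
  have snd_eq: "snd (Psi n D) = h"
  proof
    fix i
    show "snd (Psi n D) i = h i"
    proof (cases "i \<in> {1..<N}")
      case True
      then obtain k where k: "i = Suc k" by (cases i) auto
      thus ?thesis using True unfolding Psi_def vs by (simp add: T_Suc)
    next
      case False
      have "h i = undefined" using PiE_arb[OF h[unfolded Hs_def]] False by (simp add: N_def)
      moreover have "snd (Psi n D) i = undefined"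
        using False unfolding Psi_def vs restrict_def by (auto simp: N_def)
      ultimately show ?thesis by simp
    qed
  qed
  show ?thesis using fst_eq snd_eq unfolding D_def by (cases "Psi n (Phi n (bs, h))") auto
qed



lemma bij_Psi:
  assumes n: "n \<ge> 1"
  shows "bij_betw (Psi n) (Norm n) (Sigma (OSP n) Hs)"
proof (rule bij_betw_byWitness[where f' = "Phi n"])
  show "\<forall>a\<in>Norm n. Phi n (Psi n a) = a" using Phi_Psi[OF n] by blast
  show "\<forall>a'\<in>Sigma (OSP n) Hs. Psi n (Phi n a') = a'" using Psi_Phi[OF n] by auto
  show "Psi n ` Norm n \<subseteq> Sigma (OSP n) Hs" using Psi_in_Sg by blast
  show "Phi n ` Sigma (OSP n) Hs \<subseteq> Norm n" using Phi_in_Norm[OF n] by auto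
qed

lemma nat_block: "nat (int a + int b - 1) = a + b - 1"
  by arith

lemma card_int_block: "card {1..int a + int b - 1} = a + b - 1"
  by (simp add: nat_block)

lemma card_Sg:
  shows "finite (Sigma (OSP n) Hs)"
    "card (Sigma (OSP n) Hs) = (\<Sum>bs\<in>OSP n. \<Prod>i\<in>{1..<length bs}. card (bs ! (i - 1)) + card (bs ! i) - 1)"
proof -
  have fo: "finite (OSP n)" by (rule finite_osp) simp
  have fh: "\<forall>bs\<in>OSP n. finite (Hs bs)" unfolding Hs_def by (auto intro!: finite_PiE)
  show "finite (Sigma (OSP n) Hs)" using fo fh by (intro finite_SigmaI) auto
  have "card (Sigma (OSP n) Hs) = (\<Sum>bs\<in>OSP n. card (Hs bs))" using fo fh by (rule card_SigmaI)
  also have "\<dots> = (\<Sum>bs\<in>OSP n. \<Prod>i\<in>{1..<length bs}. card (bs ! (i - 1)) + card (bs ! i) - 1)"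
    unfolding Hs_def by (intro sum.cong refl) (simp add: card_PiE nat_block)
  finally show "card (Sigma (OSP n) Hs) = (\<Sum>bs\<in>OSP n. \<Prod>i\<in>{1..<length bs}. card (bs ! (i - 1)) + card (bs ! i) - 1)" .
qed

definition sh :: "nat \<Rightarrow> (nat \<Rightarrow> int) \<Rightarrow> int \<Rightarrow> nat \<Rightarrow> int" where
  "sh n D c = (\<lambda>v. if v \<in> {1..n} then D v + c else 0)"

lemma revc_sh: "revc n D \<Longrightarrow> revc n (sh n D c)"
proof -
  assume R: "revc n D"
  show "revc n (sh n D c)" unfolding revc_gap
  proof (intro ballI impI)
    fix u v assume u: "u \<in> {1..n}" and v: "v \<in> {1..n}" and lt: "sh n D c u < sh n D c v"
    have lt': "D u < D v" using lt u v by (simp add: sh_def)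
    have s1: "{w\<in>{1..n}. sh n D c u \<le> sh n D c w \<and> sh n D c w < sh n D c v} = {w\<in>{1..n}. D u \<le> D w \<and> D w < D v}"
      using u v by (auto simp: sh_def)
    have s2: "{w\<in>{1..n}. sh n D c u < sh n D c w \<and> sh n D c w \<le> sh n D c v} = {w\<in>{1..n}. D u < D w \<and> D w \<le> D v}"
      using u v by (auto simp: sh_def)
    have "D v - D u < int (card {w\<in>{1..n}. D u \<le> D w \<and> D w < D v}) + int (card {w\<in>{1..n}. D u < D w \<and> D w \<le> D v})"
      using R[unfolded revc_gap] u v lt' by blast
    thus "sh n D c v - sh n D c u < int (card {w\<in>{1..n}. sh n D c u \<le> sh n D c w \<and> sh n D c w < sh n D c v}) + int (card {w\<in>{1..n}. sh n D c u < sh n D c w \<and> sh n D c w \<le> sh n D c v})"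
      unfolding s1 s2 using u v by (simp add: sh_def)
  qed
qed

lemma bij_quot:
  assumes n: "n \<ge> 1"
  shows "bij_betw (\<lambda>D. config_equiv n `` {D}) (Norm n) ({D. period_config n D} // config_equiv n)"
proof -
  let ?ce = "config_equiv n"
  have ne: "{1..n} \<noteq> {}" using n by auto
  have minz: "\<exists>w\<in>{1..n}. D w = 0" "\<And>w. w \<in> {1..n} \<Longrightarrow> 0 \<le> D w" if "D \<in> Norm n" for D
  proof -
    have m: "Min (D ` {1..n}) = 0" using that by (simp add: Norm_def)
    have "Min (D ` {1..n}) \<in> D ` {1..n}" using ne by (intro Min_in) auto
    thus "\<exists>w\<in>{1..n}. D w = 0" using m by auto
    show "0 \<le> D w" if "w \<in> {1..n}" for w using m Min_le[of "D ` {1..n}" "D w"] that by auto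
  qed
  have inj: "inj_on (\<lambda>D. ?ce `` {D}) (Norm n)"
  proof (rule inj_onI)
    fix D1 D2 assume D1: "D1 \<in> Norm n" and D2: "D2 \<in> Norm n" and eq: "?ce `` {D1} = ?ce `` {D2}"
    have c1: "D1 \<in> configs n" and c2: "D2 \<in> configs n" using D1 D2 by (auto simp: Norm_def)
    have "(D2, D2) \<in> ?ce" using c2 unfolding config_equiv_def by auto
    hence "(D1, D2) \<in> ?ce" using eq by auto
    then obtain c where c: "\<forall>v\<in>{1..n}. D2 v = D1 v + c" unfolding config_equiv_def by auto
    obtain w1 where w1: "w1 \<in> {1..n}" "D1 w1 = 0" using minz(1)[OF D1] by blast
    obtain w2 where w2: "w2 \<in> {1..n}" "D2 w2 = 0" using minz(1)[OF D2] by blast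
    have "0 \<le> D2 w1" "0 \<le> D1 w2" using minz(2)[OF D2 w1(1)] minz(2)[OF D1 w2(1)] by auto
    hence "c = 0" using c w1 w2 by force
    show "D1 = D2"
    proof
      fix v show "D1 v = D2 v"
        using c \<open>c = 0\<close> c1 c2 unfolding configs_def by (cases "v \<in> {1..n}") auto
    qed
  qed
  have img: "(\<lambda>D. ?ce `` {D}) ` Norm n = {D. period_config n D} // ?ce"
  proof
    show "(\<lambda>D. ?ce `` {D}) ` Norm n \<subseteq> {D. period_config n D} // ?ce"
    proof
      fix X assume "X \<in> (\<lambda>D. ?ce `` {D}) ` Norm n"
      then obtain D where D: "D \<in> Norm n" "X = ?ce `` {D}" by blast
      have "period_config n D" using D(1) period_iff by (auto simp: Norm_def)
      thus "X \<in> {D. period_config n D} // ?ce" using D(2) by (auto intro: quotientI)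
    qed
    show "{D. period_config n D} // ?ce \<subseteq> (\<lambda>D. ?ce `` {D}) ` Norm n"
    proof
      fix X assume "X \<in> {D. period_config n D} // ?ce"
      then obtain D where D: "period_config n D" "X = ?ce `` {D}" by (auto elim: quotientE)
      have cD: "D \<in> configs n" and rD: "revc n D" using D(1) period_iff by auto
      define m where "m = Min (D ` {1..n})"
      define D0 where "D0 = sh n D (- m)"
      have c0: "D0 \<in> configs n" by (simp add: D0_def sh_def configs_def)
      have r0: "revc n D0" unfolding D0_def by (rule revc_sh[OF rD])
      have m0: "Min (D0 ` {1..n}) = 0"
      proof (rule Min_eqI)
        show "finite (D0 ` {1..n})" by simp
        show "0 \<le> y" if yin: "y \<in> D0 ` {1..n}" for y
        proof -
          obtain w where w: "w \<in> {1..n}" "y = D0 w" using yin by blast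
          have "m \<le> D w" unfolding m_def using w(1) by (intro Min_le) auto
          thus ?thesis using w by (simp add: D0_def sh_def)
        qed
        have "m \<in> D ` {1..n}" unfolding m_def using ne by (intro Min_in) auto
        then obtain w where "w \<in> {1..n}" "D w = m" by auto
        thus "0 \<in> D0 ` {1..n}" by (force simp: D0_def sh_def)
      qed
      have N0: "D0 \<in> Norm n" using c0 r0 m0 by (simp add: Norm_def)
      have "?ce `` {D} = ?ce `` {D0}"
      proof (rule set_eqI)
        fix D'
        show "D' \<in> ?ce `` {D} \<longleftrightarrow> D' \<in> ?ce `` {D0}"
        proof
          assume "D' \<in> ?ce `` {D}"
          then obtain c where "D' \<in> configs n" "\<forall>v\<in>{1..n}. D' v = D v + c"
            unfolding config_equiv_def by auto
          hence "D' \<in> configs n" "\<forall>v\<in>{1..n}. D' v = D0 v + (c + m)"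
            by (auto simp: D0_def sh_def)
          thus "D' \<in> ?ce `` {D0}" using c0 unfolding config_equiv_def by blast
        next
          assume "D' \<in> ?ce `` {D0}"
          then obtain c where "D' \<in> configs n" "\<forall>v\<in>{1..n}. D' v = D0 v + c"
            unfolding config_equiv_def by auto
          hence "D' \<in> configs n" "\<forall>v\<in>{1..n}. D' v = D v + (c - m)"
            by (auto simp: D0_def sh_def)
          thus "D' \<in> ?ce `` {D}" using cD unfolding config_equiv_def by blast
        qed
      qed
      thus "X \<in> (\<lambda>D. ?ce `` {D}) ` Norm n" using D(2) N0 by blast
    qed
  qed
  show ?thesis using inj img unfolding bij_betw_def by blast
qed

theorem theorem5p1:
  fixes n :: nat
  assumes "n \<ge> 1"
  shows "finite ({D. period_config n D} // config_equiv n) \<and>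
         card ({D. period_config n D} // config_equiv n) =
           (\<Sum>bs\<in>ordered_set_partitions {1..n}.
              \<Prod>i\<in>{1..<length bs}. card (bs ! (i - 1)) + card (bs ! i) - 1)"
proof -
  have b1: "bij_betw (Psi n) (Norm n) (Sigma (OSP n) Hs)" by (rule bij_Psi[OF assms])
  have b2: "bij_betw (\<lambda>D. config_equiv n `` {D}) (Norm n) ({D. period_config n D} // config_equiv n)"
    by (rule bij_quot[OF assms])
  have fN: "finite (Norm n)" using bij_betw_finite[OF b1] card_Sg(1) by blast
  have "finite ({D. period_config n D} // config_equiv n)" using bij_betw_finite[OF b2] fN by blast
  moreover have "card ({D. period_config n D} // config_equiv n) = card (Norm n)"
    using bij_betw_same_card[OF b2] by simp
  moreover have "card (Norm n) = card (Sigma (OSP n) Hs)" using bij_betw_same_card[OF b1] .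
  ultimately show ?thesis using card_Sg(2) by simp
qed


end
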